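(* For a round $t\ge2$, there is a point $W\in\mathbb R^{(t-1)K}$ such that \[\Delta_{t-1}(W)\le 8\sqrt{K/\beta_t},\qquad W\in\mathcal C,\qquad \forall Z\in\mathcal C:\ \mathbb{E}_{x\sim h_{t-1}}\Bigl[\sum_a\frac{Z(x,a)}{W'(x,a)}\Bigr]\le\max\{4K,\beta_t\Delta_{t-1}(Z)^2\}.\] In particular, the value $\mathrm{OPT}_t$ of the RandomizedUCB optimization problem in round $t$ is bounded by $8\sqrt{K/\beta_t}\le110\sqrt{KC_{t-1}/(t-1)}$.
   Context: $A$ is a set of $K$ actions, $X$ a set of contexts, $\Pi$ a finite set of $N$ policies $\pi:X\to A$, $\delta\in(0,1)$. $h_{t-1}=((x_i,a_i,r_i,p_i))_{i=1}^{t-1}$ is a history with $r_i\in[0,1]$, $p_i\in(0,1]$. $C_t=2\log(Nt/\delta)$, $\mu_t=\min\{\frac1{2K},\sqrt{C_t/(2Kt)}\}$, $\beta_t=\frac{t-1}{180C_{t-1}}$. Vectors have coordinates indexed by $(x,a)\in\{x_1,\dots,x_{t-1}\}\times A$; policy $\pi$ is identified with $\pi(x,a)=\mathbb{I}(\pi(x)=a)$; $\mathcal C$ is the convex hull of policy vectors; for a distribution $P$ over $\Pi$, $W_P(x,a)=\sum_{\pi:\pi(x)=a}P(\pi)\in\mathcal C$. $W'(x,a)=(1-K\mu_t)W(x,a)+\mu_t$. $\mathbb{E}_{x\sim h_{t-1}}$ is the average over $x_1,\dots,x_{t-1}$. $\eta_{t-1}(W)=\frac1{t-1}\sum_i r_iW(x_i,a_i)/p_i$,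 $\Delta_{t-1}(W)=\max_{\pi}\eta_{t-1}(\pi)-\eta_{t-1}(W)$. The RandomizedUCB optimization problem in round $t$ is: minimize $\sum_\pi P(\pi)\Delta_{t-1}(\pi)$ over distributions $P$ on $\Pi$ subject to, for all distributions $Q$ over $\Pi$, $\mathbb{E}_{\pi\sim Q}\mathbb{E}_{x\sim h_{t-1}}[1/((1-K\mu_t)W_P(x,\pi(x))+\mu_t)]\le\max\{4K,(t-1)\Delta_{t-1}(W_Q)^2/(180C_{t-1})\}$; $\mathrm{OPT}_t$ is its optimal value. *)

theory Defs
  imports "HOL-Analysis.Analysis"
begin

text \<open>A history entry is (x_i, a_i, r_i, p_i).  Histories are lists; h ! (i-1) is round i.
  Vectors in R^{(t-1)K} are functions on pairs (x,a), required to vanish outside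
  the index set {x_1,...,x_{t-1}} x A.\<close>

type_synonym ('x,'a) hist = "('x \<times> 'a \<times> real \<times> real) list"

definition hctx :: "('x,'a) hist \<Rightarrow> 'x set" where
  "hctx h = (\<lambda>(x,a,r,p). x) ` set h"

definition polvec :: "'a set \<Rightarrow> ('x,'a) hist \<Rightarrow> ('x \<Rightarrow> 'a) \<Rightarrow> ('x \<times> 'a \<Rightarrow> real)" where
  "polvec A h \<pi> = (\<lambda>(x,a). if x \<in> hctx h \<and> a \<in> A \<and> \<pi> x = a then 1 else 0)"

definition fconv_hull :: "('b \<Rightarrow> real) set \<Rightarrow> ('b \<Rightarrow> real) set" where
  "fconv_hull S = {W. \<exists>u. (\<forall>v\<in>S. 0 \<le> u v) \<and> sum u S = 1 \<and>
                          W = (\<lambda>z. \<Sum>v\<in>S. u v * v z)}"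

definition CC :: "'a set \<Rightarrow> ('x,'a) hist \<Rightarrow> ('x \<Rightarrow> 'a) set \<Rightarrow> ('x \<times> 'a \<Rightarrow> real) set" where
  "CC A h Pol = fconv_hull (polvec A h ` Pol)"

definition is_dist :: "('x \<Rightarrow> 'a) set \<Rightarrow> (('x \<Rightarrow> 'a) \<Rightarrow> real) \<Rightarrow> bool" where
  "is_dist Pol P \<longleftrightarrow> (\<forall>\<pi>\<in>Pol. 0 \<le> P \<pi>) \<and> sum P Pol = 1"

definition WP :: "'a set \<Rightarrow> ('x,'a) hist \<Rightarrow> ('x \<Rightarrow> 'a) set \<Rightarrow> (('x \<Rightarrow> 'a) \<Rightarrow> real) \<Rightarrow> ('x \<times> 'a \<Rightarrow> real)" where
  "WP A h Pol P = (\<lambda>(x,a). if x \<in> hctx h \<and> a \<in> A then (\<Sum>\<pi>\<in>{\<pi>\<in>Pol. \<pi> x = a}. P \<pi>) else 0)"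

definition Ex_h :: "('x,'a) hist \<Rightarrow> ('x \<Rightarrow> real) \<Rightarrow> real" where
  "Ex_h h f = (\<Sum>i<length h. f (fst (h ! i))) / real (length h)"

definition eta :: "('x,'a) hist \<Rightarrow> ('x \<times> 'a \<Rightarrow> real) \<Rightarrow> real" where
  "eta h W = (\<Sum>i<length h. (case h ! i of (x,a,r,p) \<Rightarrow> r * W (x,a) / p)) / real (length h)"

definition Delta :: "'a set \<Rightarrow> ('x,'a) hist \<Rightarrow> ('x \<Rightarrow> 'a) set \<Rightarrow> ('x \<times> 'a \<Rightarrow> real) \<Rightarrow> real" where
  "Delta A h Pol W = Max ((\<lambda>\<pi>. eta h (polvec A h \<pi>)) ` Pol) - eta h W"

definition Cc :: "nat \<Rightarrow> real \<Rightarrow> nat \<Rightarrow> real" where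
  "Cc N \<delta> t = 2 * ln (real N * real t / \<delta>)"

definition mu :: "nat \<Rightarrow> nat \<Rightarrow> real \<Rightarrow> nat \<Rightarrow> real" where
  "mu K N \<delta> t = min (1 / (2 * real K)) (sqrt (Cc N \<delta> t / (2 * real K * real t)))"

definition beta :: "nat \<Rightarrow> real \<Rightarrow> nat \<Rightarrow> real" where
  "beta N \<delta> t = real (t - 1) / (180 * Cc N \<delta> (t - 1))"

definition smooth :: "nat \<Rightarrow> real \<Rightarrow> ('x \<times> 'a \<Rightarrow> real) \<Rightarrow> ('x \<times> 'a \<Rightarrow> real)" where
  "smooth K m W = (\<lambda>z. (1 - real K * m) * W z + m)"

text \<open>RandomizedUCB optimization problem in round t (with t-1 = length h)\<close>
definition rucb_feasible :: "'a set \<Rightarrow> ('x,'a) hist \<Rightarrow> ('x \<Rightarrow> 'a) set \<Rightarrow> real \<Rightarrow> nat \<Rightarrow>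
    (('x \<Rightarrow> 'a) \<Rightarrow> real) \<Rightarrow> bool" where
  "rucb_feasible A h Pol \<delta> t P \<longleftrightarrow> is_dist Pol P \<and>
     (\<forall>Q. is_dist Pol Q \<longrightarrow>
        (\<Sum>\<pi>\<in>Pol. Q \<pi> * Ex_h h (\<lambda>x. 1 / ((1 - real (card A) * mu (card A) (card Pol) \<delta> t)
                 * WP A h Pol P (x, \<pi> x) + mu (card A) (card Pol) \<delta> t)))
        \<le> max (4 * real (card A))
               (real (t - 1) * (Delta A h Pol (WP A h Pol Q))\<^sup>2 / (180 * Cc (card Pol) \<delta> (t - 1))))"

definition OPT :: "'a set \<Rightarrow> ('x,'a) hist \<Rightarrow> ('x \<Rightarrow> 'a) set \<Rightarrow> real \<Rightarrow> nat \<Rightarrow> real" where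
  "OPT A h Pol \<delta> t = Inf {(\<Sum>\<pi>\<in>Pol. P \<pi> * Delta A h Pol (polvec A h \<pi>)) | P. rucb_feasible A h Pol \<delta> t P}"

end

theory Submission
  imports Defs
begin


lemma ln_lb:
  fixes y :: real assumes "\<bar>y\<bar> \<le> 1/2" shows "y - 2*y^2 \<le> ln (1 + y)"
proof (cases "y \<ge> 0")
  case True
  then have "y - y^2 \<le> ln (1+y)" using assms by (intro ln_one_plus_pos_lower_bound) auto
  moreover have "y^2 \<ge> 0" by simp
  ultimately show ?thesis by linarith
next
  case False
  then have "- (-y) - 2*(-y)^2 \<le> ln (1 - (-y))" using assms by (intro ln_one_minus_pos_lower_bound) auto
  then show ?thesis by simp
qed

lemma fo_ineq:
  fixes I :: "'i set" and a d :: "'i \<Rightarrow> real" and c \<mu> :: real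
  assumes fin: "finite I" and mu: "0 < \<mu>" and a: "\<forall>i\<in>I. a i \<ge> \<mu>" and d: "\<forall>i\<in>I. \<bar>d i\<bar> \<le> 1"
  and H: "\<forall>\<epsilon>. 0 < \<epsilon> \<and> \<epsilon> \<le> 1 \<longrightarrow> 0 \<le> c*\<epsilon> + (\<Sum>i\<in>I. ln (a i)) - (\<Sum>i\<in>I. ln (a i + \<epsilon> * d i))"
  shows "(\<Sum>i\<in>I. d i / a i) \<le> c"
proof -
  define B where "B = 2 * (\<Sum>i\<in>I. (d i / a i)^2)"
  have B0: "B \<ge> 0" unfolding B_def by (simp add: sum_nonneg)
  have key: "0 \<le> (c - (\<Sum>i\<in>I. d i / a i)) + \<epsilon> * B" if e: "0 < \<epsilon>" "\<epsilon> \<le> 1" "\<epsilon> \<le> \<mu>/2" for \<epsilon>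
  proof -
    have each: "ln (a i) + \<epsilon> * (d i / a i) - \<epsilon>^2 * (2*(d i / a i)^2) \<le> ln (a i + \<epsilon> * d i)" if i: "i \<in> I" for i
    proof -
      have ai: "a i \<ge> \<mu>" using a i by auto
      have ai0: "a i > 0" using ai mu by linarith
      define y where "y = \<epsilon> * d i / a i"
      have "\<bar>y\<bar> = \<epsilon> * \<bar>d i\<bar> / a i" using e ai0 by (simp add: y_def abs_mult)
      also have "\<dots> \<le> \<epsilon> * 1 / \<mu>"
      proof (rule frac_le)
        show "\<epsilon> * \<bar>d i\<bar> \<le> \<epsilon> * 1" using d i e by (intro mult_left_mono) auto
      qed (use e ai mu in auto)
      also have "\<dots> \<le> 1/2" using e mu by (simp add: field_simps)
      finally have yb: "\<bar>y\<bar> \<le> 1/2" .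
      have "a i + \<epsilon> * d i = a i * (1 + y)" using ai0 by (simp add: y_def field_simps)
      moreover have "1 + y > 0" using yb by linarith
      ultimately have "ln (a i + \<epsilon> * d i) = ln (a i) + ln (1 + y)" using ai0 by (simp add: ln_mult)
      moreover have "y - 2*y^2 \<le> ln (1+y)" using ln_lb yb by blast
      moreover have "y = \<epsilon> * (d i / a i)" by (simp add: y_def)
      moreover have "y^2 = \<epsilon>^2 * (d i / a i)^2" by (simp add: y_def power_mult_distrib power_divide)
      ultimately show ?thesis by linarith
    qed
    have "(\<Sum>i\<in>I. ln (a i) + \<epsilon> * (d i / a i) - \<epsilon>^2 * (2*(d i / a i)^2)) \<le> (\<Sum>i\<in>I. ln (a i + \<epsilon> * d i))"
      using each by (rule sum_mono)
    then have "(\<Sum>i\<in>I. ln (a i)) + \<epsilon> * (\<Sum>i\<in>I. d i / a i) - \<epsilon>^2 * B \<le> (\<Sum>i\<in>I. ln (a i + \<epsilon> * d i))"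
      by (simp add: B_def sum.distrib sum_subtractf sum_distrib_left)
    then have "0 \<le> c*\<epsilon> - \<epsilon> * (\<Sum>i\<in>I. d i / a i) + \<epsilon>^2 * B" using H e by force
    then have "0 \<le> \<epsilon> * ((c - (\<Sum>i\<in>I. d i / a i)) + \<epsilon> * B)" by (simp add: algebra_simps power2_eq_square)
    then show ?thesis using e by (simp add: zero_le_mult_iff)
  qed
  show ?thesis
  proof (rule ccontr)
    assume nt: "\<not> (\<Sum>i\<in>I. d i / a i) \<le> c"
    define X where "X = c - (\<Sum>i\<in>I. d i / a i)"
    have X: "X < 0" using nt by (simp add: X_def)
    define \<epsilon> where "\<epsilon> = min (min 1 (\<mu>/2)) (- X / (2 * (B + 1)))"
    have "- X / (2 * (B + 1)) > 0" using X B0 by (intro divide_pos_pos) auto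
    then have e0: "0 < \<epsilon>" using mu by (simp add: \<epsilon>_def)
    have "\<epsilon> * B \<le> (- X / (2 * (B + 1))) * B" using B0 by (intro mult_right_mono) (auto simp: \<epsilon>_def)
    also have "\<dots> < - X" using X B0 mult_nonneg_nonpos[of B X] by (simp add: field_simps)
    finally have "X + \<epsilon> * B < 0" by linarith
    moreover have "\<epsilon> \<le> 1" "\<epsilon> \<le> \<mu>/2" unfolding \<epsilon>_def by linarith+
    ultimately have "0 \<le> X + \<epsilon> * B" unfolding X_def using key e0 by blast
    then show False using \<open>X + \<epsilon> * B < 0\<close> by linarith
  qed
qed



definition WPl :: "'a set \<Rightarrow> ('x,'a) hist \<Rightarrow> ('x \<Rightarrow> 'a) set \<Rightarrow> (('x \<Rightarrow> 'a) \<Rightarrow> real) \<Rightarrow> ('x \<times> 'a \<Rightarrow> real)" where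
  "WPl A h Pol P = (\<lambda>z. \<Sum>\<pi>\<in>Pol. P \<pi> * polvec A h \<pi> z)"

lemma WP_eq: "finite Pol \<Longrightarrow> WP A h Pol P = WPl A h Pol P"
  unfolding WP_def WPl_def polvec_def
  by (auto simp: fun_eq_iff sum.inter_filter intro!: sum.cong)

lemma eta_lin: "eta h (WPl A h Pol P) = (\<Sum>\<pi>\<in>Pol. P \<pi> * eta h (polvec A h \<pi>))"
proof -
  have "\<And>i. (case h ! i of (x,a,r,p) \<Rightarrow> r * WPl A h Pol P (x,a) / p) =
     (\<Sum>\<pi>\<in>Pol. P \<pi> * (case h ! i of (x,a,r,p) \<Rightarrow> r * polvec A h \<pi> (x,a) / p))"
    by (auto simp: WPl_def sum_distrib_left sum_divide_distrib algebra_simps split: prod.splits)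
  then have "eta h (WPl A h Pol P) = (\<Sum>i<length h. \<Sum>\<pi>\<in>Pol. P \<pi> * (case h ! i of (x,a,r,p) \<Rightarrow> r * polvec A h \<pi> (x,a) / p)) / real (length h)"
    unfolding eta_def by simp
  also have "\<dots> = (\<Sum>\<pi>\<in>Pol. \<Sum>i<length h. P \<pi> * (case h ! i of (x,a,r,p) \<Rightarrow> r * polvec A h \<pi> (x,a) / p)) / real (length h)"
    by (subst sum.swap) (rule refl)
  also have "\<dots> = (\<Sum>\<pi>\<in>Pol. P \<pi> * eta h (polvec A h \<pi>))"
    unfolding eta_def sum_divide_distrib by (simp add: sum_distrib_left)
  finally show ?thesis .
qed

lemma WPl_CC:
  assumes fin: "finite Pol" and P: "is_dist Pol P"
  shows "WPl A h Pol P \<in> CC A h Pol"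
proof -
  define u where "u v = (\<Sum>\<pi>\<in>{\<pi>\<in>Pol. polvec A h \<pi> = v}. P \<pi>)" for v
  have "\<forall>v\<in>polvec A h ` Pol. 0 \<le> u v" using P unfolding u_def is_dist_def by (auto intro: sum_nonneg)
  moreover have "sum u (polvec A h ` Pol) = 1"
    using P sum.image_gen[OF fin, of P "polvec A h"] unfolding u_def is_dist_def by simp
  moreover have "WPl A h Pol P = (\<lambda>z. \<Sum>v\<in>polvec A h ` Pol. u v * v z)"
  proof
    fix z
    have "WPl A h Pol P z = (\<Sum>v\<in>polvec A h ` Pol. \<Sum>\<pi>\<in>{\<pi>\<in>Pol. polvec A h \<pi> = v}. P \<pi> * polvec A h \<pi> z)"
      unfolding WPl_def by (rule sum.image_gen[OF fin])
    also have "\<dots> = (\<Sum>v\<in>polvec A h ` Pol. u v * v z)"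
      unfolding u_def by (auto simp: sum_distrib_right intro!: sum.cong)
    finally show "WPl A h Pol P z = (\<Sum>v\<in>polvec A h ` Pol. u v * v z)" .
  qed
  ultimately show ?thesis unfolding CC_def fconv_hull_def by blast
qed

lemma CC_WPl:
  assumes fin: "finite Pol" and W: "W \<in> CC A h Pol"
  shows "\<exists>P. is_dist Pol P \<and> W = WPl A h Pol P"
proof -
  obtain u where u0: "\<forall>v\<in>polvec A h ` Pol. 0 \<le> u v" and u1: "sum u (polvec A h ` Pol) = 1"
    and W: "W = (\<lambda>z. \<Sum>v\<in>polvec A h ` Pol. u v * v z)"
    using W unfolding CC_def fconv_hull_def by blast
  define F where "F v = {\<pi>\<in>Pol. polvec A h \<pi> = v}" for v
  have cF: "card (F v) > 0" if "v \<in> polvec A h ` Pol" for v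
    using that fin unfolding F_def by (auto simp: card_gt_0_iff)
  define P where "P \<pi> = u (polvec A h \<pi>) / card (F (polvec A h \<pi>))" for \<pi>
  have gen: "(\<Sum>\<pi>\<in>Pol. P \<pi> * g (polvec A h \<pi>)) = (\<Sum>v\<in>polvec A h ` Pol. u v * g v)" for g :: "_ \<Rightarrow> real"
  proof -
    have "(\<Sum>\<pi>\<in>Pol. P \<pi> * g (polvec A h \<pi>)) = (\<Sum>v\<in>polvec A h ` Pol. \<Sum>\<pi>\<in>F v. P \<pi> * g (polvec A h \<pi>))"
      unfolding F_def by (rule sum.image_gen[OF fin])
    also have "\<dots> = (\<Sum>v\<in>polvec A h ` Pol. \<Sum>\<pi>\<in>F v. u v / card (F v) * g v)"
      by (intro sum.cong refl) (auto simp: P_def F_def)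
    also have "\<dots> = (\<Sum>v\<in>polvec A h ` Pol. u v * g v)"
      using cF by (intro sum.cong refl) simp
    finally show ?thesis .
  qed
  have "is_dist Pol P"
    unfolding is_dist_def
  proof
    show "\<forall>\<pi>\<in>Pol. 0 \<le> P \<pi>" using u0 by (auto simp: P_def)
    show "sum P Pol = 1" using gen[of "\<lambda>_. 1"] u1 by simp
  qed
  moreover have "W = WPl A h Pol P"
    unfolding W WPl_def
  proof (rule ext)
    fix z show "(\<Sum>v\<in>polvec A h ` Pol. u v * v z) = (\<Sum>\<pi>\<in>Pol. P \<pi> * polvec A h \<pi> z)"
      using gen[of "\<lambda>v. v z"] by simp
  qed
  ultimately show ?thesis by blast
qed

lemma Delta_WPl:
  assumes "finite Pol" "Pol \<noteq> {}" "is_dist Pol P"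
  shows "Delta A h Pol (WPl A h Pol P) \<ge> 0"
proof -
  let ?M = "Max ((\<lambda>\<pi>. eta h (polvec A h \<pi>)) ` Pol)"
  have "(\<Sum>\<pi>\<in>Pol. P \<pi> * eta h (polvec A h \<pi>)) \<le> (\<Sum>\<pi>\<in>Pol. P \<pi> * ?M)"
    using assms unfolding is_dist_def by (intro sum_mono mult_left_mono) auto
  also have "\<dots> = ?M" using assms unfolding is_dist_def by (simp add: sum_distrib_right[symmetric])
  finally show ?thesis unfolding Delta_def eta_lin by simp
qed

lemma WPl_bounds:
  assumes "is_dist Pol P" "finite Pol"
  shows "0 \<le> WPl A h Pol P z" "WPl A h Pol P z \<le> 1"
proof -
  have pv: "0 \<le> polvec A h \<pi> z" "polvec A h \<pi> z \<le> 1" for \<pi> by (auto simp: polvec_def split: prod.splits)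
  show "0 \<le> WPl A h Pol P z" using assms pv unfolding WPl_def is_dist_def by (auto intro: sum_nonneg)
  have "WPl A h Pol P z \<le> (\<Sum>\<pi>\<in>Pol. P \<pi> * 1)"
    using assms pv unfolding WPl_def is_dist_def by (intro sum_mono mult_left_mono) auto
  then show "WPl A h Pol P z \<le> 1" using assms unfolding is_dist_def by simp
qed



definition Dset :: "('x \<Rightarrow> 'a) set \<Rightarrow> (('x \<Rightarrow> 'a) \<Rightarrow> real) set" where
  "Dset Pol = (PiE UNIV (\<lambda>\<pi>. if \<pi> \<in> Pol then {0..1} else {0})) \<inter> {P. sum P Pol = 1}"

lemma cont_coord: "continuous_on S (\<lambda>P::'b \<Rightarrow> real. P \<pi>)"
  by (rule continuous_on_subset[OF continuous_on_product_coordinates]) auto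

lemma compact_Dset: fixes Pol :: "('x \<Rightarrow> 'a) set" shows "compact (Dset Pol)"
proof -
  have "compactin (product_topology (\<lambda>_. euclidean) UNIV) (PiE UNIV (\<lambda>\<pi>. if \<pi> \<in> Pol then {0..1::real} else {0}))"
    by (subst compactin_PiE) auto
  then have c1: "compact (PiE UNIV (\<lambda>\<pi>. if \<pi> \<in> Pol then {0..1::real} else {0}))"
    by (simp add: euclidean_product_topology)
  have "continuous_on UNIV (\<lambda>P::('x \<Rightarrow> 'a) \<Rightarrow> real. sum P Pol)"
    by (intro continuous_intros cont_coord)
  then have c2: "closed {P::('x \<Rightarrow> 'a) \<Rightarrow> real. sum P Pol = 1}"
    by (intro closed_Collect_eq) auto
  show ?thesis unfolding Dset_def using c1 c2 by (rule compact_Int_closed)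
qed

lemma Dset_mem: "P \<in> Dset Pol \<longleftrightarrow> (\<forall>\<pi>\<in>Pol. 0 \<le> P \<pi> \<and> P \<pi> \<le> 1) \<and> (\<forall>\<pi>. \<pi> \<notin> Pol \<longrightarrow> P \<pi> = 0) \<and> sum P Pol = 1"
  unfolding Dset_def by (auto simp: PiE_UNIV_domain Pi_iff split: if_splits)

lemma Dset_dist: "P \<in> Dset Pol \<Longrightarrow> is_dist Pol P"
  by (auto simp: Dset_mem is_dist_def)

lemma dist_Dset: assumes "finite Pol" "is_dist Pol Q"
  shows "(\<lambda>\<pi>. if \<pi> \<in> Pol then Q \<pi> else 0) \<in> Dset Pol"
proof -
  have "Q \<pi> \<le> 1" if "\<pi> \<in> Pol" for \<pi>
  proof -
    have "Q \<pi> = sum Q {\<pi>}" by simp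
    also have "\<dots> \<le> sum Q Pol" using assms that by (intro sum_mono2) (auto simp: is_dist_def)
    finally show ?thesis using assms by (simp add: is_dist_def)
  qed
  then show ?thesis using assms by (auto simp: Dset_mem is_dist_def intro: sum.cong)
qed

definition Phi where
  "Phi A h Pol K m lam P = - lam * real (length h) * eta h (WPl A h Pol P)
     - (\<Sum>j<length h. \<Sum>a\<in>A. ln ((1 - real K * m) * WPl A h Pol P (fst (h!j), a) + m))"

lemma main_fo:
  fixes A :: "'a set" and Pol :: "('x \<Rightarrow> 'a) set" and h :: "('x,'a) hist" and K :: nat and m lam :: real
  assumes finA: "finite A" and finP: "finite Pol" and Pne: "Pol \<noteq> {}"
    and m0: "0 < m" and Km: "real K * m \<le> 1/2" and lam: "0 < lam"
  defines "n \<equiv> length h"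
  shows "\<exists>P0. is_dist Pol P0 \<and> (\<forall>Q. is_dist Pol Q \<longrightarrow>
     (1 - real K * m) * (\<Sum>j<n. \<Sum>a\<in>A. WPl A h Pol Q (fst (h!j), a) / smooth K m (WPl A h Pol P0) (fst (h!j), a))
     \<le> (1 - real K * m) * (\<Sum>j<n. \<Sum>a\<in>A. WPl A h Pol P0 (fst (h!j), a) / smooth K m (WPl A h Pol P0) (fst (h!j), a))
       + lam * n * (eta h (WPl A h Pol P0) - eta h (WPl A h Pol Q)))"
proof -
  let ?W = "WPl A h Pol"
  have km1: "1 - real K * m \<ge> 1/2" using Km by linarith
  have Dne: "Dset Pol \<noteq> {}"
  proof -
    obtain \<pi>0 where "\<pi>0 \<in> Pol" using Pne by blast
    then have "(\<lambda>\<pi>. if \<pi> = \<pi>0 then 1 else 0) \<in> Dset Pol"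
      using finP by (auto simp: Dset_mem sum.delta)
    then show ?thesis by blast
  qed
  have cont: "continuous_on (Dset Pol) (Phi A h Pol K m lam)"
  proof -
    have pos: "(1 - real K * m) * (\<Sum>\<pi>\<in>Pol. P \<pi> * polvec A h \<pi> z) + m > 0" if "P \<in> Dset Pol" for P z
    proof -
      have "?W P z \<ge> 0" using WPl_bounds(1)[OF Dset_dist[OF that] finP] .
      then have "(1 - real K * m) * ?W P z \<ge> 0" using km1 by simp
      then show ?thesis using m0 by (simp add: WPl_def)
    qed
    show ?thesis unfolding Phi_def eta_lin
      unfolding WPl_def
      by (intro continuous_intros cont_coord) (metis less_irrefl pos)
  qed
  obtain P0 where P0: "P0 \<in> Dset Pol" and P0min: "\<forall>P\<in>Dset Pol. Phi A h Pol K m lam P0 \<le> Phi A h Pol K m lam P"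
    using continuous_attains_inf[OF compact_Dset Dne cont] by blast
  have P0d: "is_dist Pol P0" using Dset_dist[OF P0] .
  define W0 where "W0 = ?W P0"
  define sm where "sm z = (1 - real K * m) * W0 z + m" for z
  have smW: "smooth K m (?W P0) = sm" unfolding smooth_def sm_def W0_def by auto
  have W01: "0 \<le> W0 z" "W0 z \<le> 1" for z using WPl_bounds[OF P0d finP] unfolding W0_def by auto
  have smm: "sm z \<ge> m" for z using W01(1)[of z] km1 unfolding sm_def by simp
  show ?thesis
  proof (intro exI conjI allI impI)
    show "is_dist Pol P0" by fact
    fix Q assume Qd: "is_dist Pol Q"
    define Q' where "Q' \<pi> = (if \<pi> \<in> Pol then Q \<pi> else 0)" for \<pi>
    have Q'D: "Q' \<in> Dset Pol" unfolding Q'_def by (rule dist_Dset[OF finP Qd])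
    have WQ': "?W Q' = ?W Q" unfolding WPl_def Q'_def by (auto intro!: sum.cong)
    define Z where "Z = ?W Q"
    have Z01: "0 \<le> Z z" "Z z \<le> 1" for z using WPl_bounds[OF Qd finP] unfolding Z_def by auto
    define I where "I = {..<n} \<times> A"
    define a where "a = (\<lambda>(j,b). sm (fst (h!j), b))"
    define d where "d = (\<lambda>(j,b). (1 - real K * m) * (Z (fst (h!j), b) - W0 (fst (h!j), b)))"
    define c where "c = lam * n * (eta h W0 - eta h Z)"
    have finI: "finite I" unfolding I_def using finA by simp
    have aI: "\<forall>i\<in>I. a i \<ge> m" using smm by (auto simp: a_def)
    have dI: "\<forall>i\<in>I. \<bar>d i\<bar> \<le> 1"
    proof
      fix i assume "i \<in> I"
      obtain j b where i: "i = (j,b)" by (cases i)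
      have "\<bar>Z (fst (h!j), b) - W0 (fst (h!j), b)\<bar> \<le> 1" using Z01[of "(fst (h!j), b)"] W01[of "(fst (h!j), b)"] by (simp add: abs_le_iff)
      moreover have "\<bar>1 - real K * m\<bar> \<le> 1" using km1 m0 by (simp add: abs_le_iff)
      ultimately have "\<bar>1 - real K * m\<bar> * \<bar>Z (fst (h!j), b) - W0 (fst (h!j), b)\<bar> \<le> 1 * 1"
        by (intro mult_mono) auto
      then show "\<bar>d i\<bar> \<le> 1" by (simp add: d_def i abs_mult)
    qed
    have H: "\<forall>\<epsilon>. 0 < \<epsilon> \<and> \<epsilon> \<le> 1 \<longrightarrow> 0 \<le> c*\<epsilon> + (\<Sum>i\<in>I. ln (a i)) - (\<Sum>i\<in>I. ln (a i + \<epsilon> * d i))"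
    proof (intro allI impI)
      fix \<epsilon> :: real assume e: "0 < \<epsilon> \<and> \<epsilon> \<le> 1"
      define Pe where "Pe \<pi> = P0 \<pi> + \<epsilon> * (Q' \<pi> - P0 \<pi>)" for \<pi>
      have PeD: "Pe \<in> Dset Pol"
      proof -
        have "0 \<le> Pe \<pi> \<and> Pe \<pi> \<le> 1" if "\<pi> \<in> Pol" for \<pi>
        proof -
          have b: "0 \<le> P0 \<pi>" "P0 \<pi> \<le> 1" "0 \<le> Q' \<pi>" "Q' \<pi> \<le> 1" using P0 Q'D that by (auto simp: Dset_mem)
          have "Pe \<pi> = (1 - \<epsilon>) * P0 \<pi> + \<epsilon> * Q' \<pi>" by (simp add: Pe_def algebra_simps)
          moreover have "(1 - \<epsilon>) * P0 \<pi> + \<epsilon> * Q' \<pi> \<le> (1 - \<epsilon>) * 1 + \<epsilon> * 1"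
            using b e by (intro add_mono mult_left_mono) auto
          moreover have "0 \<le> (1 - \<epsilon>) * P0 \<pi> + \<epsilon> * Q' \<pi>" using b e by simp
          ultimately show ?thesis by simp
        qed
        moreover have "Pe \<pi> = 0" if "\<pi> \<notin> Pol" for \<pi> using P0 Q'D that by (simp add: Pe_def Dset_mem)
        moreover have "sum Pe Pol = 1" using P0 Q'D
          by (simp add: Pe_def Dset_mem sum.distrib sum_distrib_left[symmetric] sum_subtractf)
        ultimately show ?thesis by (simp add: Dset_mem)
      qed
      have WPe: "?W Pe z = W0 z + \<epsilon> * (Z z - W0 z)" for z
      proof -
        have "?W Pe z = ?W P0 z + \<epsilon> * ?W Q' z - \<epsilon> * ?W P0 z" unfolding WPl_def Pe_def
          by (simp add: algebra_simps sum.distrib sum_subtractf sum_distrib_left)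
        then show ?thesis using WQ' by (simp add: W0_def Z_def algebra_simps)
      qed
      have etaPe: "eta h (?W Pe) = eta h W0 + \<epsilon> * (eta h Z - eta h W0)"
      proof -
        have "eta h (?W Pe) = eta h (?W P0) + \<epsilon> * eta h (?W Q') - \<epsilon> * eta h (?W P0)" unfolding eta_lin Pe_def
          by (simp add: algebra_simps sum.distrib sum_subtractf sum_distrib_left)
        then show ?thesis using WQ' by (simp add: W0_def Z_def algebra_simps)
      qed
      have lnsum: "(\<Sum>j<n. \<Sum>b\<in>A. ln ((1 - real K * m) * ?W Pe (fst (h!j), b) + m)) = (\<Sum>i\<in>I. ln (a i + \<epsilon> * d i))"
        unfolding I_def sum.cartesian_product' a_def d_def sm_def WPe
        by (intro sum.cong refl) (simp add: algebra_simps)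
      have lnsum0: "(\<Sum>j<n. \<Sum>b\<in>A. ln ((1 - real K * m) * W0 (fst (h!j), b) + m)) = (\<Sum>i\<in>I. ln (a i))"
        unfolding I_def sum.cartesian_product' a_def sm_def by simp
      have "Phi A h Pol K m lam P0 \<le> Phi A h Pol K m lam Pe" using P0min PeD by blast
      then show "0 \<le> c*\<epsilon> + (\<Sum>i\<in>I. ln (a i)) - (\<Sum>i\<in>I. ln (a i + \<epsilon> * d i))"
        unfolding Phi_def lnsum lnsum0 etaPe n_def[symmetric] c_def W0_def[symmetric]
        by (simp add: algebra_simps)
    qed
    have fo: "(\<Sum>i\<in>I. d i / a i) \<le> c" by (rule fo_ineq[OF finI m0 aI dI H])
    have "(\<Sum>i\<in>I. d i / a i) = (1 - real K * m) * (\<Sum>j<n. \<Sum>b\<in>A. Z (fst (h!j), b) / sm (fst (h!j), b))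
        - (1 - real K * m) * (\<Sum>j<n. \<Sum>b\<in>A. W0 (fst (h!j), b) / sm (fst (h!j), b))"
      unfolding I_def sum.cartesian_product' a_def d_def
      by (simp add: sum_distrib_left sum_subtractf[symmetric] diff_divide_distrib add_divide_distrib algebra_simps)
    then show "(1 - real K * m) * (\<Sum>j<n. \<Sum>a\<in>A. WPl A h Pol Q (fst (h!j), a) / smooth K m (WPl A h Pol P0) (fst (h!j), a))
     \<le> (1 - real K * m) * (\<Sum>j<n. \<Sum>a\<in>A. WPl A h Pol P0 (fst (h!j), a) / smooth K m (WPl A h Pol P0) (fst (h!j), a))
       + lam * n * (eta h (WPl A h Pol P0) - eta h (WPl A h Pol Q))"
      using fo unfolding smW Z_def[symmetric] W0_def[symmetric] c_def smW[folded W0_def] by simp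
  qed
qed



lemma arith_max:
  fixes K b D :: real assumes K: "K \<ge> 1" and b: "b > 0" and D: "D \<ge> 0"
  shows "2 * (K + sqrt (K * b) / 4 * D) \<le> max (4 * K) (b * D^2)"
proof -
  define s where "s = b * D^2"
  define y where "y = sqrt (K * b) * D"
  have y0: "y \<ge> 0" using K b D by (simp add: y_def)
  have ys: "y^2 = K * s" using K b D by (simp add: y_def s_def power_mult_distrib)
  have e: "2 * (K + sqrt (K * b) / 4 * D) = 2*K + y/2" by (simp add: y_def)
  have "2*K + y/2 \<le> 4*K \<or> 2*K + y/2 \<le> s"
  proof (cases "s \<le> 4 * K")
    case True
    have "K * s \<le> K * (4*K)" using True K by (intro mult_left_mono) auto
    then have "y^2 \<le> (2*K)^2" using ys by (simp add: power2_eq_square)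
    then have "y \<le> 2*K" by (rule power2_le_imp_le) (use K in linarith)
    then show ?thesis using K by linarith
  next
    case False
    then have "K * s \<le> (s/4) * s" using K by (intro mult_right_mono) auto
    then have "y^2 \<le> (s/2)^2" using ys by (simp add: power2_eq_square)
    then have "y \<le> s/2" by (rule power2_le_imp_le) (use False K in linarith)
    then show ?thesis using K False by linarith
  qed
  then show ?thesis unfolding e s_def by linarith
qed

lemma final:
  fixes A :: "'a set" and Pol :: "('x \<Rightarrow> 'a) set" and h :: "('x,'a) hist"
    and \<delta> :: real and t K N :: nat
  assumes finA: "finite A" and Ane: "A \<noteq> {}" and KA: "K = card A"
    and finP: "finite Pol" and Pne: "Pol \<noteq> {}" and NP: "N = card Pol" and polA: "\<forall>\<pi>\<in>Pol. \<forall>x. \<pi> x \<in> A"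
    and d0: "0 < \<delta>" and d1: "\<delta> < 1"
    and t2: "t \<ge> 2" and hl: "length h = t - 1"
  shows "(\<exists>W. Delta A h Pol W \<le> 8 * sqrt (real K / beta N \<delta> t) \<and> W \<in> CC A h Pol \<and>
            (\<forall>Z\<in>CC A h Pol.
               Ex_h h (\<lambda>x. \<Sum>a\<in>A. Z (x,a) / smooth K (mu K N \<delta> t) W (x,a))
                 \<le> max (4 * real K) (beta N \<delta> t * (Delta A h Pol Z)\<^sup>2)))
       \<and> OPT A h Pol \<delta> t \<le> 8 * sqrt (real K / beta N \<delta> t)
       \<and> 8 * sqrt (real K / beta N \<delta> t) \<le> 110 * sqrt (real K * Cc N \<delta> (t - 1) / real (t - 1))"
proof -
  define n where "n = length h"
  have n1: "n \<ge> 1" using t2 hl by (simp add: n_def)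
  have "1 \<le> card A" using finA Ane by (simp add: Suc_le_eq card_gt_0_iff)
  then have K1: "real K \<ge> 1" by (simp add: KA)
  have "1 \<le> card Pol" using finP Pne by (simp add: Suc_le_eq card_gt_0_iff)
  then have N1: "real N \<ge> 1" by (simp add: NP)
  have Cpos: "Cc N \<delta> s > 0" if "s \<ge> 1" for s
  proof -
    have "real s \<ge> 1" using that by simp
    then have "real N * real s \<ge> 1" using mult_mono[of 1 "real N" 1 "real s"] N1 by simp
    then have "real N * real s / \<delta> > 1" using d0 d1 by (simp add: field_simps)
    then show ?thesis by (simp add: Cc_def)
  qed
  define m where "m = mu K N \<delta> t"
  have m0: "0 < m" using Cpos[of t] t2 K1 by (simp add: m_def mu_def)
  have mle: "m \<le> 1 / (2 * real K)" by (simp add: m_def mu_def)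
  have Km: "real K * m \<le> 1/2"
  proof -
    have "real K * m \<le> real K * (1 / (2 * real K))" using mle K1 by (intro mult_left_mono) auto
    then show ?thesis using K1 by simp
  qed
  have km1: "1 - real K * m \<ge> 1/2" using Km by linarith
  define b where "b = beta N \<delta> t"
  have Ct1: "Cc N \<delta> (t - 1) > 0" using Cpos[of "t-1"] t2 by simp
  have b0: "b > 0" using Ct1 t2 by (simp add: b_def beta_def)
  define lam where "lam = sqrt (real K * b) / 4"
  have lam0: "lam > 0" using K1 b0 by (simp add: lam_def)
  obtain P0 where P0d: "is_dist Pol P0" and FO: "\<forall>Q. is_dist Pol Q \<longrightarrow>
     (1 - real K * m) * (\<Sum>j<n. \<Sum>a\<in>A. WPl A h Pol Q (fst (h!j), a) / smooth K m (WPl A h Pol P0) (fst (h!j), a))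
     \<le> (1 - real K * m) * (\<Sum>j<n. \<Sum>a\<in>A. WPl A h Pol P0 (fst (h!j), a) / smooth K m (WPl A h Pol P0) (fst (h!j), a))
       + lam * n * (eta h (WPl A h Pol P0) - eta h (WPl A h Pol Q))"
    using main_fo[OF finA finP Pne m0 Km lam0, of h] unfolding n_def by blast
  define W0 where "W0 = WPl A h Pol P0"
  define sm where "sm = smooth K m W0"
  define S where "S V = (\<Sum>j<n. \<Sum>a\<in>A. V (fst (h!j), a) / sm (fst (h!j), a))" for V :: "'x \<times> 'a \<Rightarrow> real"
  define M where "M = Max ((\<lambda>\<pi>. eta h (polvec A h \<pi>)) ` Pol)"
  have DeltaM: "Delta A h Pol V = M - eta h V" for V by (simp add: Delta_def M_def)
  have FO': "(1 - real K * m) * S (WPl A h Pol Q) \<le> (1 - real K * m) * S W0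
      + lam * n * (Delta A h Pol (WPl A h Pol Q) - Delta A h Pol W0)" if "is_dist Pol Q" for Q
    using FO that unfolding S_def sm_def W0_def DeltaM by auto
  have W01: "0 \<le> W0 z" "W0 z \<le> 1" for z using WPl_bounds[OF P0d finP] unfolding W0_def by auto
  have SW0: "(1 - real K * m) * S W0 \<le> real n * real K"
  proof -
    have "(1 - real K * m) * S W0 = (\<Sum>j<n. \<Sum>a\<in>A. (1 - real K * m) * W0 (fst (h!j), a) / sm (fst (h!j), a))"
      unfolding S_def by (simp add: sum_distrib_left)
    also have "\<dots> \<le> (\<Sum>j<n. \<Sum>a\<in>A. 1)"
    proof (intro sum_mono)
      fix j a
      have "(1 - real K * m) * W0 (fst (h!j), a) \<ge> 0" using W01 km1 by simp
      moreover have "sm (fst (h!j), a) = (1 - real K * m) * W0 (fst (h!j), a) + m" by (simp add: sm_def smooth_def)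
      ultimately show "(1 - real K * m) * W0 (fst (h!j), a) / sm (fst (h!j), a) \<le> 1" using m0 by simp
    qed
    finally show ?thesis using KA by simp
  qed
  have Spos: "S V \<ge> 0" if "\<And>z. V z \<ge> 0" for V
  proof -
    have "sm z > 0" for z using W01[of z] km1 m0 by (simp add: sm_def smooth_def add_nonneg_pos)
    then show ?thesis unfolding S_def using that by (intro sum_nonneg divide_nonneg_pos) auto
  qed
  have DW0: "Delta A h Pol W0 \<ge> 0" unfolding W0_def by (rule Delta_WPl[OF finP Pne P0d])
  have "M \<in> (\<lambda>\<pi>. eta h (polvec A h \<pi>)) ` Pol" unfolding M_def using finP Pne by (intro Max_in) auto
  then obtain \<pi>s where \<pi>s: "\<pi>s \<in> Pol" "eta h (polvec A h \<pi>s) = M" by auto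
  define Qs where "Qs \<pi> = (if \<pi> = \<pi>s then 1 else (0::real))" for \<pi>
  have Qsd: "is_dist Pol Qs" using \<pi>s finP by (simp add: is_dist_def Qs_def)
  have WQs: "WPl A h Pol Qs = polvec A h \<pi>s"
  proof
    fix z
    have "WPl A h Pol Qs z = (\<Sum>\<pi>\<in>Pol. if \<pi> = \<pi>s then polvec A h \<pi> z else 0)"
      unfolding WPl_def Qs_def by (rule sum.cong) auto
    also have "\<dots> = polvec A h \<pi>s z" using \<pi>s finP by (simp add: sum.delta')
    finally show "WPl A h Pol Qs z = polvec A h \<pi>s z" .
  qed
  have DW0b: "Delta A h Pol W0 \<le> real K / lam"
  proof -
    have "0 \<le> (1 - real K * m) * S (WPl A h Pol Qs)" using km1 Spos[of "WPl A h Pol Qs"] WPl_bounds(1)[OF Qsd finP] by simp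
    also have "\<dots> \<le> real n * real K + lam * n * (0 - Delta A h Pol W0)"
      using FO'[OF Qsd] SW0 WQs \<pi>s by (simp add: DeltaM)
    finally have "lam * (real n * Delta A h Pol W0) \<le> real n * real K" by (simp add: algebra_simps)
    then have "real n * (lam * Delta A h Pol W0) \<le> real n * real K" by (simp add: algebra_simps)
    then have "lam * Delta A h Pol W0 \<le> real K" using n1 by simp
    then show ?thesis using lam0 by (simp add: field_simps)
  qed
  have Kl: "real K / lam = 4 * sqrt (real K / b)"
  proof -
    have "real K = sqrt (real K) * sqrt (real K)" using K1 by simp
    then show ?thesis unfolding lam_def using K1 b0
      by (simp add: real_sqrt_mult real_sqrt_divide field_simps)
  qed
  have Dbound: "Delta A h Pol W0 \<le> 8 * sqrt (real K / b)"
  proof -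
    have "sqrt (real K / b) \<ge> 0" using K1 b0 by simp
    then show ?thesis using DW0b Kl by linarith
  qed
  have Exh: "Ex_h h (\<lambda>x. \<Sum>a\<in>A. V (x,a) / sm (x,a)) = S V / real n" for V
    unfolding Ex_h_def S_def n_def by simp
  have cons: "Ex_h h (\<lambda>x. \<Sum>a\<in>A. WPl A h Pol Q (x,a) / sm (x,a)) \<le> max (4 * real K) (b * (Delta A h Pol (WPl A h Pol Q))\<^sup>2)"
    if Qd: "is_dist Pol Q" for Q
  proof -
    define Dq where "Dq = Delta A h Pol (WPl A h Pol Q)"
    have D0: "Dq \<ge> 0" unfolding Dq_def by (rule Delta_WPl[OF finP Pne Qd])
    have "(1 - real K * m) * S (WPl A h Pol Q) \<le> real n * (real K + lam * Dq)"
    proof -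
      have e1: "lam * n * (Dq - Delta A h Pol W0) = lam*n*Dq - lam*n*Delta A h Pol W0" by (simp add: algebra_simps)
      have e2: "lam*n*Delta A h Pol W0 \<ge> 0" using lam0 DW0 by simp
      have e3: "real n * (real K + lam * Dq) = real n * real K + lam*n*Dq" by (simp add: algebra_simps)
      have f: "(1 - real K * m) * S (WPl A h Pol Q) \<le> (1 - real K * m) * S W0 + lam * n * (Dq - Delta A h Pol W0)"
        using FO'[OF Qd] by (simp add: Dq_def)
      show ?thesis using f SW0 e1 e2 e3 by argo
    qed
    then have "(1 - real K * m) * (S (WPl A h Pol Q) / real n) \<le> real K + lam * Dq"
      using n1 by (simp add: field_simps)
    moreover have "real K + lam * Dq \<ge> 0" using K1 lam0 D0 by simp
    ultimately have "S (WPl A h Pol Q) / real n \<le> 2 * (real K + lam * Dq)"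
    proof -
      have X0: "S (WPl A h Pol Q) / real n \<ge> 0" using Spos[of "WPl A h Pol Q"] WPl_bounds(1)[OF Qd finP] by simp
      have "(1/2) * (S (WPl A h Pol Q) / real n) \<le> (1 - real K * m) * (S (WPl A h Pol Q) / real n)"
        using km1 X0 by (rule mult_right_mono)
      then show ?thesis using \<open>(1 - real K * m) * (S (WPl A h Pol Q) / real n) \<le> real K + lam * Dq\<close> by argo
    qed
    also have "\<dots> \<le> max (4 * real K) (b * Dq\<^sup>2)" unfolding lam_def by (rule arith_max[OF K1 b0 D0])
    finally show ?thesis unfolding Exh Dq_def .
  qed
  have part1: "\<exists>W. Delta A h Pol W \<le> 8 * sqrt (real K / beta N \<delta> t) \<and> W \<in> CC A h Pol \<and>
            (\<forall>Z\<in>CC A h Pol.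
               Ex_h h (\<lambda>x. \<Sum>a\<in>A. Z (x,a) / smooth K (mu K N \<delta> t) W (x,a))
                 \<le> max (4 * real K) (beta N \<delta> t * (Delta A h Pol Z)\<^sup>2))"
  proof (intro exI conjI ballI)
    show "Delta A h Pol W0 \<le> 8 * sqrt (real K / beta N \<delta> t)" using Dbound by (simp add: b_def)
    show "W0 \<in> CC A h Pol" unfolding W0_def by (rule WPl_CC[OF finP P0d])
    fix Z assume "Z \<in> CC A h Pol"
    then obtain Q where Qd: "is_dist Pol Q" and Z: "Z = WPl A h Pol Q" using CC_WPl[OF finP] by blast
    show "Ex_h h (\<lambda>x. \<Sum>a\<in>A. Z (x,a) / smooth K (mu K N \<delta> t) W0 (x,a))
                 \<le> max (4 * real K) (beta N \<delta> t * (Delta A h Pol Z)\<^sup>2)"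
      using cons[OF Qd] unfolding Z sm_def m_def b_def .
  qed
  have hx: "fst (h!i) \<in> hctx h" if "i < length h" for i
    using that unfolding hctx_def by (force simp: split_def)
  have feas: "rucb_feasible A h Pol \<delta> t P0"
    unfolding rucb_feasible_def
  proof (intro conjI allI impI)
    show "is_dist Pol P0" by fact
    fix Q assume Qd: "is_dist Pol Q"
    have inner: "(\<Sum>\<pi>\<in>Pol. Q \<pi> / sm (x, \<pi> x)) = (\<Sum>a\<in>A. WPl A h Pol Q (x,a) / sm (x,a))"
      if x: "x \<in> hctx h" for x
    proof -
      have "(\<Sum>a\<in>A. WPl A h Pol Q (x,a) / sm (x,a)) = (\<Sum>a\<in>A. \<Sum>\<pi>\<in>Pol. Q \<pi> * (if \<pi> x = a then 1 / sm (x,a) else 0))"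
        unfolding WPl_def sum_divide_distrib by (intro sum.cong refl) (use x in \<open>auto simp: polvec_def\<close>)
      also have "\<dots> = (\<Sum>\<pi>\<in>Pol. Q \<pi> * (\<Sum>a\<in>A. if \<pi> x = a then 1 / sm (x,a) else 0))"
        by (subst sum.swap) (simp add: sum_distrib_left)
      also have "\<dots> = (\<Sum>\<pi>\<in>Pol. Q \<pi> / sm (x, \<pi> x))"
        using polA finA by (intro sum.cong refl) (simp add: sum.delta)
      finally show ?thesis by simp
    qed
    have "(\<Sum>\<pi>\<in>Pol. Q \<pi> * Ex_h h (\<lambda>x. 1 / ((1 - real (card A) * mu (card A) (card Pol) \<delta> t)
                 * WP A h Pol P0 (x, \<pi> x) + mu (card A) (card Pol) \<delta> t)))
        = (\<Sum>\<pi>\<in>Pol. Q \<pi> * Ex_h h (\<lambda>x. 1 / sm (x, \<pi> x)))"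
      unfolding KA[symmetric] NP[symmetric] m_def[symmetric] WP_eq[OF finP] W0_def[symmetric]
      by (simp add: sm_def smooth_def)
    also have "\<dots> = Ex_h h (\<lambda>x. \<Sum>\<pi>\<in>Pol. Q \<pi> / sm (x, \<pi> x))"
      unfolding Ex_h_def sum_divide_distrib sum_distrib_left by (subst sum.swap) (simp add: field_simps)
    also have "\<dots> = Ex_h h (\<lambda>x. \<Sum>a\<in>A. WPl A h Pol Q (x,a) / sm (x,a))"
      unfolding Ex_h_def using inner hx by (intro arg_cong[where f="\<lambda>u. u / real (length h)"] sum.cong) auto
    also have "\<dots> \<le> max (4 * real K) (b * (Delta A h Pol (WPl A h Pol Q))\<^sup>2)" by (rule cons[OF Qd])
    also have "\<dots> = max (4 * real (card A))
               (real (t - 1) * (Delta A h Pol (WP A h Pol Q))\<^sup>2 / (180 * Cc (card Pol) \<delta> (t - 1)))"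
      unfolding WP_eq[OF finP] b_def beta_def KA NP by simp
    finally show "(\<Sum>\<pi>\<in>Pol. Q \<pi> * Ex_h h (\<lambda>x. 1 / ((1 - real (card A) * mu (card A) (card Pol) \<delta> t)
                 * WP A h Pol P0 (x, \<pi> x) + mu (card A) (card Pol) \<delta> t)))
        \<le> max (4 * real (card A))
               (real (t - 1) * (Delta A h Pol (WP A h Pol Q))\<^sup>2 / (180 * Cc (card Pol) \<delta> (t - 1)))" .
  qed
  have objP0: "(\<Sum>\<pi>\<in>Pol. P0 \<pi> * Delta A h Pol (polvec A h \<pi>)) = Delta A h Pol W0"
    using P0d unfolding DeltaM W0_def eta_lin is_dist_def
    by (simp add: right_diff_distrib sum_subtractf sum_distrib_right[symmetric])
  have part2: "OPT A h Pol \<delta> t \<le> 8 * sqrt (real K / beta N \<delta> t)"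
  proof -
    have "OPT A h Pol \<delta> t \<le> (\<Sum>\<pi>\<in>Pol. P0 \<pi> * Delta A h Pol (polvec A h \<pi>))"
      unfolding OPT_def
    proof (rule cInf_lower)
      show "(\<Sum>\<pi>\<in>Pol. P0 \<pi> * Delta A h Pol (polvec A h \<pi>)) \<in> {(\<Sum>\<pi>\<in>Pol. P \<pi> * Delta A h Pol (polvec A h \<pi>)) | P. rucb_feasible A h Pol \<delta> t P}"
        using feas by blast
      have "Delta A h Pol (polvec A h \<pi>) \<ge> 0" if "\<pi> \<in> Pol" for \<pi>
        using that finP unfolding DeltaM M_def by simp
      then show "bdd_below {(\<Sum>\<pi>\<in>Pol. P \<pi> * Delta A h Pol (polvec A h \<pi>)) | P. rucb_feasible A h Pol \<delta> t P}"
        by (intro bdd_belowI[of _ 0]) (auto simp: rucb_feasible_def is_dist_def intro!: sum_nonneg)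
    qed
    then show ?thesis using objP0 Dbound by (simp add: b_def)
  qed
  have part3: "8 * sqrt (real K / beta N \<delta> t) \<le> 110 * sqrt (real K * Cc N \<delta> (t - 1) / real (t - 1))"
  proof -
    define y where "y = real K * Cc N \<delta> (t - 1) / real (t - 1)"
    have y0: "y \<ge> 0" using Ct1 by (simp add: y_def)
    have "real K / beta N \<delta> t = 180 * y" using t2 by (simp add: beta_def y_def field_simps)
    then have "8 * sqrt (real K / beta N \<delta> t) = (8 * sqrt 180) * sqrt y" by (simp add: real_sqrt_mult)
    also have "\<dots> \<le> 110 * sqrt y"
    proof (rule mult_right_mono)
      have "sqrt 180 \<le> sqrt ((55/4)^2)" by (subst real_sqrt_le_iff) (simp add: power2_eq_square)
      then show "8 * sqrt 180 \<le> (110::real)" by simp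
    qed (use y0 in simp)
    finally show ?thesis by (simp add: y_def)
  qed
  show ?thesis using part1 part2 part3 by blast
qed

theorem lemma15:
  fixes A :: "'a set" and Pol :: "('x \<Rightarrow> 'a) set" and h :: "('x,'a) hist"
    and \<delta> :: real and t K N :: nat
  assumes "finite A" "A \<noteq> {}" "K = card A"
    and "finite Pol" "Pol \<noteq> {}" "N = card Pol" "\<forall>\<pi>\<in>Pol. \<forall>x. \<pi> x \<in> A"
    and "0 < \<delta>" "\<delta> < 1"
    and "t \<ge> 2" "length h = t - 1"
    and "\<forall>(x,a,r,p)\<in>set h. a \<in> A \<and> 0 \<le> r \<and> r \<le> 1 \<and> 0 < p \<and> p \<le> 1"
  shows "(\<exists>W. Delta A h Pol W \<le> 8 * sqrt (real K / beta N \<delta> t) \<and> W \<in> CC A h Pol \<and>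
            (\<forall>Z\<in>CC A h Pol.
               Ex_h h (\<lambda>x. \<Sum>a\<in>A. Z (x,a) / smooth K (mu K N \<delta> t) W (x,a))
                 \<le> max (4 * real K) (beta N \<delta> t * (Delta A h Pol Z)\<^sup>2)))
       \<and> OPT A h Pol \<delta> t \<le> 8 * sqrt (real K / beta N \<delta> t)
       \<and> 8 * sqrt (real K / beta N \<delta> t) \<le> 110 * sqrt (real K * Cc N \<delta> (t - 1) / real (t - 1))"
    using assms(1-11) by (rule final)

end
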